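(* In the labelled calculus $\mathbf{G3I}$, the rules $L\prec$: from $x\prec y,\Sigma;\underline{\Gamma},x:A,y:A\Rightarrow\underline{\Delta}$ infer $x\prec y,\Sigma;\underline{\Gamma},x:A\Rightarrow\underline{\Delta}$, and $R\prec$: from $x\prec y,\Sigma;\underline{\Gamma}\Rightarrow\underline{\Delta},x:A,y:A$ infer $x\prec y,\Sigma;\underline{\Gamma}\Rightarrow\underline{\Delta},y:A$ are admissible (whenever the premiss is derivable, so is the conclusion), for arbitrary formulae $A$.
   Context: Formulae are propositional formulae built from atoms, $\bot$, $\land$, $\lor$, $\supset$; labelled formulae are $x:A$ with $x$ a label. A labelled sequent is $\Sigma;\underline{\Gamma}\Rightarrow\underline{\Delta}$ with $\Sigma$ a finite multiset of relational formulae $x\prec y$ and $\underline{\Gamma},\underline{\Delta}$ finite multisets of labelled formulae; $S$ stands for $\underline{\Gamma}\Rightarrow\underline{\Delta}$. The rules of $\mathbf{G3I}$ ($P$ atomic): Ax: $x\prec y,\Sigma;x:P,\underline{\Gamma}\Rightarrow y:P,\underline{\Delta}$; L$\bot$: $\Sigma;x:\bot,\underline{\Gamma}\Rightarrow\underline{\Delta}$; L$\land$: from $\Sigma;\underline{\Gamma},x:A,x:B\Rightarrow\underline{\Delta}$ infer $\Sigma;\underline{\Gamma},x:(A\land B)\Rightarrow\underline{\Delta}$; R$\land$: from $\Sigma;\underline{\Gamma}\Rightarrow x:A,\underline{\Delta}$ and $\Sigma;\underline{\Gamma}\Rightarrow x:B,\underline{\Delta}$ infer $\Sigma;\underline{\Gamma}\Rightarrow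 x:(A\land B),\underline{\Delta}$; L$\lor$: from $\Sigma;\underline{\Gamma},x:A\Rightarrow\underline{\Delta}$ and $\Sigma;\underline{\Gamma},x:B\Rightarrow\underline{\Delta}$ infer $\Sigma;\underline{\Gamma},x:(A\lor B)\Rightarrow\underline{\Delta}$; R$\lor$: from $\Sigma;\underline{\Gamma}\Rightarrow x:A,x:B,\underline{\Delta}$ infer $\Sigma;\underline{\Gamma}\Rightarrow x:(A\lor B),\underline{\Delta}$; L$\supset$: from $x\prec y,\Sigma;x:(A\supset B),\underline{\Gamma}\Rightarrow\underline{\Delta},y:A$ and $x\prec y,\Sigma;x:(A\supset B),y:B,\underline{\Gamma}\Rightarrow\underline{\Delta}$ infer $x\prec y,\Sigma;x:(A\supset B),\underline{\Gamma}\Rightarrow\underline{\Delta}$; R$\supset$: from $x\prec y,\Sigma;y:A,\underline{\Gamma}\Rightarrow\underline{\Delta},y:B$ infer $\Sigma;\underline{\Gamma}\Rightarrow\underline{\Delta},x:(A\supset B)$, with $y$ fresh; refl: from $x\prec x,\Sigma;S$ infer $\Sigma;S$; trans: from $x\prec y,y\prec z,x\prec z,\Sigma;S$ infer $x\prec y,y\prec z,\Sigma;S$. *)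

theory Defs
  imports Main "HOL-Library.Multiset"
begin

datatype form = Atm nat | Bot | Conj form form | Disj form form | Imp form form

type_synonym label = nat
type_synonym rel = "label \<times> label"          (* (x,y) stands for x \<prec> y *)
type_synonym lform = "label \<times> form"         (* (x,A) stands for x : A *)

definition labels_rel :: "rel multiset \<Rightarrow> label set" where
  "labels_rel S = fst ` set_mset S \<union> snd ` set_mset S"

definition labels_fm :: "lform multiset \<Rightarrow> label set" where
  "labels_fm G = fst ` set_mset G"

inductive G3I :: "rel multiset \<Rightarrow> lform multiset \<Rightarrow> lform multiset \<Rightarrow> bool" where
  Ax: "G3I (add_mset (x,y) S) (add_mset (x, Atm P) G) (add_mset (y, Atm P) D)"
| LBot: "G3I S (add_mset (x, Bot) G) D"
| LConj: "G3I S (G + {#(x,A), (x,B)#}) D \<Longrightarrow> G3I S (add_mset (x, Conj A B) G) D"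
| RConj: "G3I S G (add_mset (x,A) D) \<Longrightarrow> G3I S G (add_mset (x,B) D)
          \<Longrightarrow> G3I S G (add_mset (x, Conj A B) D)"
| LDisj: "G3I S (add_mset (x,A) G) D \<Longrightarrow> G3I S (add_mset (x,B) G) D
          \<Longrightarrow> G3I S (add_mset (x, Disj A B) G) D"
| RDisj: "G3I S G ({#(x,A), (x,B)#} + D) \<Longrightarrow> G3I S G (add_mset (x, Disj A B) D)"
| LImp: "G3I (add_mset (x,y) S) (add_mset (x, Imp A B) G) (add_mset (y,A) D)
         \<Longrightarrow> G3I (add_mset (x,y) S) (add_mset (x, Imp A B) (add_mset (y,B) G)) D
         \<Longrightarrow> G3I (add_mset (x,y) S) (add_mset (x, Imp A B) G) D"
| RImp: "y \<notin> labels_rel S \<Longrightarrow> y \<notin> labels_fm G \<Longrightarrow> y \<notin> labels_fm D \<Longrightarrow> y \<noteq> x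
         \<Longrightarrow> G3I (add_mset (x,y) S) (add_mset (y,A) G) (add_mset (y,B) D)
         \<Longrightarrow> G3I S G (add_mset (x, Imp A B) D)"
| Refl: "G3I (add_mset (x,x) S) G D \<Longrightarrow> G3I S G D"
| Trans: "G3I ({#(x,y), (y,z), (x,z)#} + S) G D \<Longrightarrow> G3I ({#(x,y), (y,z)#} + S) G D"

end

theory Submission
  imports Defs
begin

lemma G3I_cong: "G3I S G D \<Longrightarrow> S = S' \<Longrightarrow> G = G' \<Longrightarrow> D = D' \<Longrightarrow> G3I S' G' D'"
  by simp

lemma AxM: "(a,b) \<in># S \<Longrightarrow> (a, Atm P) \<in># G \<Longrightarrow> (b, Atm P) \<in># D \<Longrightarrow> G3I S G D"
  by (metis G3I.Ax multi_member_split)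

lemma LBotM: "(a, Bot) \<in># G \<Longrightarrow> G3I S G D"
  by (metis G3I.LBot multi_member_split)

lemma LImpM: "(a,b) \<in># S \<Longrightarrow> (a, Imp A B) \<in># G \<Longrightarrow> G3I S G (add_mset (b,A) D)
   \<Longrightarrow> G3I S (add_mset (b,B) G) D \<Longrightarrow> G3I S G D"
proof -
  assume h: "(a,b) \<in># S" "(a, Imp A B) \<in># G" "G3I S G (add_mset (b,A) D)" "G3I S (add_mset (b,B) G) D"
  obtain S1 where S: "S = add_mset (a,b) S1" using h(1) multi_member_split by metis
  obtain G1 where G: "G = add_mset (a,Imp A B) G1" using h(2) multi_member_split by metis
  have "G3I (add_mset (a,b) S1) (add_mset (a, Imp A B) G1) D"
    apply (rule G3I.LImp)
    using h(3,4) S G by (simp_all add: add_mset_commute)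
  then show ?thesis using S G by simp
qed

lemma TransM: "(a,b) \<in># S \<Longrightarrow> (b,c) \<in># S \<Longrightarrow> a \<noteq> b \<Longrightarrow> G3I (add_mset (a,c) S) G D \<Longrightarrow> G3I S G D"
proof -
  assume h: "(a,b) \<in># S" "(b,c) \<in># S" "a \<noteq> b" "G3I (add_mset (a,c) S) G D"
  obtain S1 where S1: "S = add_mset (a,b) S1" using h(1) multi_member_split by metis
  have "(b,c) \<in># S1" using h(2,3) S1 by auto
  then obtain S2 where S2: "S1 = add_mset (b,c) S2" using multi_member_split by metis
  have "G3I ({#(a,b), (b,c)#} + S2) G D"
    apply (rule G3I.Trans)
    using h(4) S1 S2 by (simp add: add_mset_commute)
  then show ?thesis using S1 S2 by simp
qed

lemma finite_labels_rel[simp]: "finite (labels_rel S)"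
  by (simp add: labels_rel_def)
lemma finite_labels_fm[simp]: "finite (labels_fm S)"
  by (simp add: labels_fm_def)

lemma ex_fresh: "finite (X::nat set) \<Longrightarrow> \<exists>y. y \<notin> X"
  using ex_new_if_finite infinite_UNIV_nat by blast

lemma labels_rel_simps[simp]:
  "labels_rel (add_mset (a,b) S) = insert a (insert b (labels_rel S))"
  "labels_rel (S + T) = labels_rel S \<union> labels_rel T"
  "labels_rel {#} = {}"
  by (auto simp: labels_rel_def)

lemma labels_fm_simps[simp]:
  "labels_fm (add_mset (a,A) S) = insert a (labels_fm S)"
  "labels_fm (S + T) = labels_fm S \<union> labels_fm T"
  "labels_fm {#} = {}"
  by (auto simp: labels_fm_def)

lemma mem_labels_rel: "(a,b) \<in># S \<Longrightarrow> a \<in> labels_rel S \<and> b \<in> labels_rel S"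
  by (force simp: labels_rel_def)

lemma mem_labels_fm: "(a,A) \<in># S \<Longrightarrow> a \<in> labels_fm S"
  by (force simp: labels_fm_def)

lemma mapS_id: "(\<And>a. a \<in> labels_rel S \<Longrightarrow> f a = a) \<Longrightarrow> image_mset (map_prod f f) S = S"
proof -
  assume h: "\<And>a. a \<in> labels_rel S \<Longrightarrow> f a = a"
  have "image_mset (map_prod f f) S = image_mset id S"
    apply (rule image_mset_cong)
    using h mem_labels_rel by (metis id_apply map_prod_simp prod.collapse)
  then show ?thesis by simp
qed

lemma mapF_id: "(\<And>a. a \<in> labels_fm S \<Longrightarrow> f a = a) \<Longrightarrow> image_mset (apfst f) S = S"
proof -
  assume h: "\<And>a. a \<in> labels_fm S \<Longrightarrow> f a = a"
  have "image_mset (apfst f) S = image_mset id S"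
    apply (rule image_mset_cong)
    using h mem_labels_fm by (metis apfst_conv id_apply prod.collapse)
  then show ?thesis by simp
qed

lemma mapS_upd: "y \<notin> labels_rel S \<Longrightarrow> image_mset (map_prod (f(y:=z)) (f(y:=z))) S = image_mset (map_prod f f) S"
  apply (rule image_mset_cong)
  using mem_labels_rel by (metis fun_upd_other map_prod_simp prod.collapse)

lemma mapF_upd: "y \<notin> labels_fm S \<Longrightarrow> image_mset (apfst (f(y:=z))) S = image_mset (apfst f) S"
  apply (rule image_mset_cong)
  using mem_labels_fm by (metis fun_upd_other apfst_conv prod.collapse)

lemma subst_weak:
  "G3I S G D \<Longrightarrow> G3I (image_mset (map_prod f f) S + S') (image_mset (apfst f) G + G') (image_mset (apfst f) D + D')"
proof (induction arbitrary: f S' G' D' rule: G3I.induct)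
  case (Ax x y S P G D)
  then show ?case by (simp add: G3I.Ax)
next
  case (LBot S x G D)
  then show ?case by (simp add: G3I.LBot)
next
  case (LConj S G x A B D)
  have "G3I (image_mset (map_prod f f) S + S') (add_mset (f x, Conj A B) (image_mset (apfst f) G + G')) (image_mset (apfst f) D + D')"
    by (rule G3I.LConj) (use LConj.IH[of f S' G' D'] in simp)
  then show ?case by simp
next
  case (RConj S G x A D B)
  have "G3I (image_mset (map_prod f f) S + S') (image_mset (apfst f) G + G') (add_mset (f x, Conj A B) (image_mset (apfst f) D + D'))"
    by (rule G3I.RConj) (use RConj.IH[of f S' G' D'] in simp)+
  then show ?case by simp
next
  case (LDisj S x A G D B)
  have "G3I (image_mset (map_prod f f) S + S') (add_mset (f x, Disj A B) (image_mset (apfst f) G + G')) (image_mset (apfst f) D + D')"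
    by (rule G3I.LDisj) (use LDisj.IH[of f S' G' D'] in simp)+
  then show ?case by simp
next
  case (RDisj S G x A B D)
  have "G3I (image_mset (map_prod f f) S + S') (image_mset (apfst f) G + G') (add_mset (f x, Disj A B) (image_mset (apfst f) D + D'))"
    by (rule G3I.RDisj) (use RDisj.IH[of f S' G' D'] in simp)
  then show ?case by simp
next
  case (LImp x y S A B G D)
  have "G3I (add_mset (f x, f y) (image_mset (map_prod f f) S + S')) (add_mset (f x, Imp A B) (image_mset (apfst f) G + G')) (image_mset (apfst f) D + D')"
    by (rule G3I.LImp) (use LImp.IH[of f S' G' D'] in simp)+
  then show ?case by simp
next
  case (RImp y S G D x A B)
  let ?S = "image_mset (map_prod f f) S + S'"
  let ?G = "image_mset (apfst f) G + G'"
  let ?D = "image_mset (apfst f) D + D'"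
  obtain z where z: "z \<notin> labels_rel ?S \<union> labels_fm ?G \<union> labels_fm ?D \<union> {f x}"
    using ex_fresh[of "labels_rel ?S \<union> labels_fm ?G \<union> labels_fm ?D \<union> {f x}"] by auto
  have e1: "image_mset (map_prod (f(y:=z)) (f(y:=z))) S = image_mset (map_prod f f) S"
    using RImp.hyps by (simp add: mapS_upd)
  have e2: "image_mset (apfst (f(y:=z))) G = image_mset (apfst f) G"
    using RImp.hyps by (simp add: mapF_upd)
  have e3: "image_mset (apfst (f(y:=z))) D = image_mset (apfst f) D"
    using RImp.hyps by (simp add: mapF_upd)
  have "G3I ?S ?G (add_mset (f x, Imp A B) ?D)"
    apply (rule G3I.RImp[where y=z])
    using z apply auto[4]
    using RImp.IH[of "f(y:=z)" S' G' D'] RImp.hyps e1 e2 e3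
    by (simp del: fun_upd_apply add: fun_upd_same fun_upd_other[of x y f z])
  then show ?case by simp
next
  case (Refl x S G D)
  have "G3I (image_mset (map_prod f f) S + S') (image_mset (apfst f) G + G') (image_mset (apfst f) D + D')"
    by (rule G3I.Refl[where x="f x"]) (use Refl.IH[of f S' G' D'] in simp)
  then show ?case by simp
next
  case (Trans x y z S G D)
  have "G3I ({#(f x, f y), (f y, f z)#} + (image_mset (map_prod f f) S + S')) (image_mset (apfst f) G + G') (image_mset (apfst f) D + D')"
    by (rule G3I.Trans) (use Trans.IH[of f S' G' D'] in simp)
  then show ?case by simp
qed


lemma weakS: "G3I S G D \<Longrightarrow> G3I (add_mset p S) G D"
  using subst_weak[of S G D id "{#p#}" "{#}" "{#}"] by (simp add: map_prod.id)

lemma mem_split2: "add_mset p G1 = G0 + {#q,r#} \<Longrightarrow> p \<noteq> q \<Longrightarrow> p \<noteq> r \<Longrightarrow> \<exists>K. G0 = add_mset p K \<and> G1 = K + {#q,r#}"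
proof -
  assume h: "add_mset p G1 = G0 + {#q,r#}" "p \<noteq> q" "p \<noteq> r"
  have "p \<in># add_mset p G1" by simp
  then have "p \<in># G0 + {#q,r#}" by (simp only: h(1))
  then have "p \<in># G0" using h by auto
  then obtain K where K: "G0 = add_mset p K" using multi_member_split by metis
  then have "G1 = K + {#q,r#}" using h(1) by simp
  then show ?thesis using K by blast
qed

lemma innerL:
  "G3I S G D \<Longrightarrow> (x,y) \<in># S \<Longrightarrow> G = G0 + {#(x,A),(y,A)#} \<Longrightarrow> (\<forall>B C. A \<noteq> Conj B C \<and> A \<noteq> Disj B C)
   \<Longrightarrow> G3I S (add_mset (x,A) G0) D"
proof (induction arbitrary: G0 rule: G3I.induct)
  case (Ax a b S1 P G1 D1)
  have m0: "(a, Atm P) \<in># add_mset (a, Atm P) G1" by simp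
  have m: "(a, Atm P) \<in># G0 + {#(x,A),(y,A)#}" using m0 by (simp only: Ax.prems(2))
  show ?case
  proof (cases "(a, Atm P) \<in># add_mset (x,A) G0")
    case True show ?thesis by (rule AxM[of a b _ P]) (use True in auto)
  next
    case False
    then have e: "a = y" "A = Atm P" "x \<noteq> y" using m by auto
    have "G3I (add_mset (x,b) (add_mset (a, b) S1)) (add_mset (x,A) G0) (add_mset (b, Atm P) D1)"
      by (rule AxM[of x b _ P]) (auto simp: e)
    from TransM[of x y _ b, OF _ _ _ this] show ?thesis using Ax.prems(1) e by auto
  qed
next
  case (LBot S1 a G1 D1)
  have m0: "(a, Bot) \<in># add_mset (a, Bot) G1" by simp
  have m: "(a, Bot) \<in># G0 + {#(x,A),(y,A)#}" using m0 by (simp only: LBot.prems(2))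
  then have "\<exists>c. (c,Bot) \<in># add_mset (x,A) G0" by auto
  then show ?case using LBotM by blast
next
  case (LConj S1 G1 a C E D1)
  obtain K where K: "G0 = add_mset (a, Conj C E) K" "G1 = K + {#(x,A),(y,A)#}"
    using mem_split2[OF LConj.prems(2)] LConj.prems(3) by auto
  have "G3I S1 (add_mset (x,A) (K + {#(a,C),(a,E)#})) D1"
    by (rule LConj.IH) (use LConj.prems K in auto)
  then have "G3I S1 (add_mset (a, Conj C E) (add_mset (x,A) K)) D1"
    by (intro G3I.LConj) (simp add: add_mset_commute)
  then show ?case using K by (simp add: add_mset_commute)
next
  case (RConj S1 G1 a C D1 E)
  show ?case
    by (rule G3I.RConj) (fact RConj.IH(1)[OF RConj.prems], fact RConj.IH(2)[OF RConj.prems])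
next
  case (LDisj S1 a C G1 D1 E)
  obtain K where K: "G0 = add_mset (a, Disj C E) K" "G1 = K + {#(x,A),(y,A)#}"
    using mem_split2[OF LDisj.prems(2)] LDisj.prems(3) by auto
  have "G3I S1 (add_mset (x,A) (add_mset (a,C) K)) D1"
    by (rule LDisj.IH(1)) (use LDisj.prems K in auto)
  moreover have "G3I S1 (add_mset (x,A) (add_mset (a,E) K)) D1"
    by (rule LDisj.IH(2)) (use LDisj.prems K in auto)
  ultimately have "G3I S1 (add_mset (a, Disj C E) (add_mset (x,A) K)) D1"
    by (intro G3I.LDisj) (simp_all add: add_mset_commute)
  then show ?case using K by (simp add: add_mset_commute)
next
  case (RDisj S1 G1 a C E D1)
  show ?case
    by (rule G3I.RDisj) (fact RDisj.IH[OF RDisj.prems])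
next
  case (LImp a b S1 C E G1 D1)
  have h1: "G3I (add_mset (a,b) S1) (add_mset (x,A) G0) (add_mset (b,C) D1)"
    by (fact LImp.IH(1)[OF LImp.prems])
  have eq2: "add_mset (a, Imp C E) (add_mset (b,E) G1) = add_mset (b,E) G0 + {#(x,A),(y,A)#}"
    by (metis add_mset_commute LImp.prems(2) union_mset_add_mset_left)
  have h2: "G3I (add_mset (a,b) S1) (add_mset (b,E) (add_mset (x,A) G0)) D1"
    using LImp.IH(2)[OF LImp.prems(1) eq2 LImp.prems(3)] by (simp add: add_mset_commute)
  have m0: "(a, Imp C E) \<in># add_mset (a, Imp C E) G1" by simp
  have m: "(a, Imp C E) \<in># G0 + {#(x,A),(y,A)#}" using m0 by (simp only: LImp.prems(2))
  show ?case
  proof (cases "(a, Imp C E) \<in># add_mset (x,A) G0")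
    case True then show ?thesis by (intro LImpM[OF _ True h1 h2]) simp
  next
    case False
    then have e: "a = y" "A = Imp C E" "x \<noteq> y" using m by auto
    have "G3I (add_mset (x,b) (add_mset (a, b) S1)) (add_mset (x,A) G0) D1"
      by (rule LImpM[of x b _ C E _ D1]) (use weakS[OF h1, of "(x,b)"] weakS[OF h2, of "(x,b)"] e in auto)
    from TransM[of x y _ b, OF _ _ _ this] show ?thesis using LImp.prems(1) e by auto
  qed
next
  case (RImp b S1 G1 D1 a C E)
  have h: "G3I (add_mset (a,b) S1) (add_mset (x,A) (add_mset (b,C) G0)) (add_mset (b,E) D1)"
    by (rule RImp.IH) (use RImp.prems in auto)
  have xl: "x \<in> labels_rel S1" using RImp.prems(1) mem_labels_rel by blast
  show ?case
    by (rule G3I.RImp[where y=b]) (use RImp.hyps RImp.prems xl h in \<open>auto simp: add_mset_commute\<close>)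
next
  case (Refl a S1 G1 D1)
  show ?case by (rule G3I.Refl[where x=a]) (rule Refl.IH, use Refl.prems in auto)
next
  case (Trans a b c S1 G1 D1)
  show ?case by (rule G3I.Trans) (rule Trans.IH, use Trans.prems in auto)
qed


lemma innerR:
  "G3I S G D \<Longrightarrow> (x,y) \<in># S \<Longrightarrow> D = D0 + {#(x,A),(y,A)#} \<Longrightarrow> (\<forall>B C. A \<noteq> Conj B C \<and> A \<noteq> Disj B C \<and> A \<noteq> Imp B C)
   \<Longrightarrow> G3I S G (add_mset (y,A) D0)"
proof (induction arbitrary: D0 rule: G3I.induct)
  case (Ax a b S1 P G1 D1)
  have m0: "(b, Atm P) \<in># add_mset (b, Atm P) D1" by simp
  have m: "(b, Atm P) \<in># D0 + {#(x,A),(y,A)#}" using m0 by (simp only: Ax.prems(2))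
  show ?case
  proof (cases "(b, Atm P) \<in># add_mset (y,A) D0")
    case True show ?thesis by (rule AxM[of a b _ P]) (use True in auto)
  next
    case False
    then have e: "b = x" "A = Atm P" "x \<noteq> y" using m by auto
    show ?thesis
    proof (cases "a = x")
      case True
      show ?thesis by (rule AxM[of x y _ P]) (use True e Ax.prems(1) in auto)
    next
      case False
      have "G3I (add_mset (a,y) (add_mset (a, b) S1)) (add_mset (a, Atm P) G1) (add_mset (y,A) D0)"
        by (rule AxM[of a y _ P]) (auto simp: e)
      from TransM[of a x _ y, OF _ _ _ this] show ?thesis using Ax.prems(1) e False by auto
    qed
  qed
next
  case (LBot S1 a G1 D1)
  show ?case by (rule LBotM[of a]) simp
next
  case (LConj S1 G1 a C E D1)
  show ?case by (rule G3I.LConj) (fact LConj.IH[OF LConj.prems])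
next
  case (RConj S1 G1 a C D1 E)
  obtain K where K: "D0 = add_mset (a, Conj C E) K" "D1 = K + {#(x,A),(y,A)#}"
    using mem_split2[OF RConj.prems(2)] RConj.prems(3) by auto
  have "G3I S1 G1 (add_mset (y,A) (add_mset (a,C) K))"
    by (rule RConj.IH(1)) (use RConj.prems K in auto)
  moreover have "G3I S1 G1 (add_mset (y,A) (add_mset (a,E) K))"
    by (rule RConj.IH(2)) (use RConj.prems K in auto)
  ultimately have "G3I S1 G1 (add_mset (a, Conj C E) (add_mset (y,A) K))"
    by (intro G3I.RConj) (simp_all add: add_mset_commute)
  then show ?case using K by (simp add: add_mset_commute)
next
  case (LDisj S1 a C G1 D1 E)
  show ?case by (rule G3I.LDisj) (fact LDisj.IH(1)[OF LDisj.prems], fact LDisj.IH(2)[OF LDisj.prems])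
next
  case (RDisj S1 G1 a C E D1)
  obtain K where K: "D0 = add_mset (a, Disj C E) K" "D1 = K + {#(x,A),(y,A)#}"
    using mem_split2[OF RDisj.prems(2)] RDisj.prems(3) by auto
  have "G3I S1 G1 (add_mset (y,A) ({#(a,C),(a,E)#} + K))"
    by (rule RDisj.IH) (use RDisj.prems K in auto)
  then have "G3I S1 G1 (add_mset (a, Disj C E) (add_mset (y,A) K))"
    by (intro G3I.RDisj) (simp add: add_mset_commute)
  then show ?case using K by (simp add: add_mset_commute)
next
  case (LImp a b S1 C E G1 D1)
  have h1: "G3I (add_mset (a,b) S1) (add_mset (a, Imp C E) G1) (add_mset (y,A) (add_mset (b,C) D0))"
    by (rule LImp.IH(1)) (use LImp.prems in auto)
  have h2: "G3I (add_mset (a,b) S1) (add_mset (a, Imp C E) (add_mset (b,E) G1)) (add_mset (y,A) D0)"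
    by (fact LImp.IH(2)[OF LImp.prems])
  show ?case by (rule G3I.LImp) (use h1 h2 in \<open>simp_all add: add_mset_commute\<close>)
next
  case (RImp b S1 G1 D1 a C E)
  obtain K where K: "D0 = add_mset (a, Imp C E) K" "D1 = K + {#(x,A),(y,A)#}"
    using mem_split2[OF RImp.prems(2)] RImp.prems(3) by auto
  have h: "G3I (add_mset (a,b) S1) (add_mset (b,C) G1) (add_mset (y,A) (add_mset (b,E) K))"
    by (rule RImp.IH) (use RImp.prems K in auto)
  have yl: "y \<in> labels_rel S1" using RImp.prems(1) mem_labels_rel by blast
  have "G3I S1 G1 (add_mset (a, Imp C E) (add_mset (y,A) K))"
    by (rule G3I.RImp[where y=b]) (use RImp.hyps K yl h in \<open>auto simp: add_mset_commute\<close>)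
  then show ?case using K by (simp add: add_mset_commute)
next
  case (Refl a S1 G1 D1)
  show ?case by (rule G3I.Refl[where x=a]) (rule Refl.IH, use Refl.prems in auto)
next
  case (Trans a b c S1 G1 D1)
  show ?case by (rule G3I.Trans) (rule Trans.IH, use Trans.prems in auto)
qed


lemma invLConj:
  "G3I S G D \<Longrightarrow> G = add_mset (x, Conj A B) G0 \<Longrightarrow> G3I S (add_mset (x,A) (add_mset (x,B) G0)) D"
proof (induction arbitrary: G0 rule: G3I.induct)
  case (Ax a b S1 P G1 D1)
  have m0: "(a, Atm P) \<in># add_mset (a, Atm P) G1" by simp
  have m: "(a, Atm P) \<in># G0" using m0 by (simp only: Ax.prems(1)) auto
  show ?case by (rule AxM[of a b _ P]) (use m in auto)
next
  case (LBot S1 a G1 D1)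
  have m0: "(a, Bot) \<in># add_mset (a, Bot) G1" by simp
  have m: "(a, Bot) \<in># G0" using m0 by (simp only: LBot.prems(1)) auto
  show ?case by (rule LBotM[of a]) (use m in auto)
next
  case (LConj S1 G1 a C E D1)
  show ?case
  proof (cases "(a, Conj C E) = (x, Conj A B) \<and> G1 = G0")
    case True
    then show ?thesis using LConj.hyps by (simp add: add_mset_commute)
  next
    case False
    then obtain K where K: "G1 = add_mset (x, Conj A B) K" "G0 = add_mset (a, Conj C E) K"
      using LConj.prems by (auto simp: add_eq_conv_ex)
    have "G3I S1 (add_mset (x,A) (add_mset (x,B) (K + {#(a,C),(a,E)#}))) D1"
      by (rule LConj.IH) (simp add: K)
    then have "G3I S1 (add_mset (a, Conj C E) (add_mset (x,A) (add_mset (x,B) K))) D1"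
      by (intro G3I.LConj) (simp add: add_mset_commute)
    then show ?thesis using K by (simp add: add_mset_commute)
  qed
next
  case (RConj S1 G1 a C D1 E)
  show ?case
    by (rule G3I.RConj) (fact RConj.IH(1)[OF RConj.prems], fact RConj.IH(2)[OF RConj.prems])
next
  case (LDisj S1 a C G1 D1 E)
  obtain K where K: "G1 = add_mset (x, Conj A B) K" "G0 = add_mset (a, Disj C E) K"
    using LDisj.prems by (auto simp: add_eq_conv_ex)
  have "G3I S1 (add_mset (x,A) (add_mset (x,B) (add_mset (a,C) K))) D1"
    by (rule LDisj.IH(1)) (simp add: K add_mset_commute)
  moreover have "G3I S1 (add_mset (x,A) (add_mset (x,B) (add_mset (a,E) K))) D1"
    by (rule LDisj.IH(2)) (simp add: K add_mset_commute)
  ultimately have "G3I S1 (add_mset (a, Disj C E) (add_mset (x,A) (add_mset (x,B) K))) D1"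
    by (intro G3I.LDisj) (simp_all add: add_mset_commute)
  then show ?case using K by (simp add: add_mset_commute)
next
  case (RDisj S1 G1 a C E D1)
  show ?case
    by (rule G3I.RDisj) (fact RDisj.IH[OF RDisj.prems])
next
  case (LImp a b S1 C E G1 D1)
  have h1: "G3I (add_mset (a,b) S1) (add_mset (x,A) (add_mset (x,B) G0)) (add_mset (b,C) D1)"
    by (fact LImp.IH(1)[OF LImp.prems])
  have eq2: "add_mset (a, Imp C E) (add_mset (b,E) G1) = add_mset (x, Conj A B) (add_mset (b,E) G0)"
    by (metis add_mset_commute LImp.prems(1))
  have h2: "G3I (add_mset (a,b) S1) (add_mset (b,E) (add_mset (x,A) (add_mset (x,B) G0))) D1"
    using LImp.IH(2)[OF eq2] by (simp add: add_mset_commute)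
  have m0: "(a, Imp C E) \<in># add_mset (a, Imp C E) G1" by simp
  have m: "(a, Imp C E) \<in># G0" using m0 by (simp only: LImp.prems(1)) auto
  show ?case by (rule LImpM[OF _ _ h1 h2]) (use m in auto)
next
  case (RImp b S1 G1 D1 a C E)
  have h: "G3I (add_mset (a,b) S1) (add_mset (x,A) (add_mset (x,B) (add_mset (b,C) G0))) (add_mset (b,E) D1)"
    by (rule RImp.IH) (simp add: RImp.prems add_mset_commute)
  have xl: "x \<in> labels_fm G1" using RImp.prems by simp
  show ?case
    by (rule G3I.RImp[where y=b]) (use RImp.hyps RImp.prems xl h in \<open>auto simp: add_mset_commute\<close>)
next
  case (Refl a S1 G1 D1)
  show ?case by (rule G3I.Refl[where x=a]) (fact Refl.IH[OF Refl.prems])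
next
  case (Trans a b c S1 G1 D1)
  show ?case by (rule G3I.Trans) (fact Trans.IH[OF Trans.prems])
qed

lemma invLDisj:
  "G3I S G D \<Longrightarrow> G = add_mset (x, Disj A B) G0 \<Longrightarrow> G3I S (add_mset (x, if t then A else B) G0) D"
proof (induction arbitrary: G0 rule: G3I.induct)
  case (Ax a b S1 P G1 D1)
  have m0: "(a, Atm P) \<in># add_mset (a, Atm P) G1" by simp
  have m: "(a, Atm P) \<in># G0" using m0 by (simp only: Ax.prems(1)) auto
  show ?case by (rule AxM[of a b _ P]) (use m in auto)
next
  case (LBot S1 a G1 D1)
  have m0: "(a, Bot) \<in># add_mset (a, Bot) G1" by simp
  have m: "(a, Bot) \<in># G0" using m0 by (simp only: LBot.prems(1)) auto
  show ?case by (rule LBotM[of a]) (use m in auto)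
next
  case (LConj S1 G1 a C E D1)
  obtain K where K: "G1 = add_mset (x, Disj A B) K" "G0 = add_mset (a, Conj C E) K"
    using LConj.prems by (auto simp: add_eq_conv_ex)
  have "G3I S1 (add_mset (x, if t then A else B) (K + {#(a,C),(a,E)#})) D1"
    by (rule LConj.IH) (simp add: K)
  then have "G3I S1 (add_mset (a, Conj C E) (add_mset (x, if t then A else B) K)) D1"
    by (intro G3I.LConj) (simp add: add_mset_commute)
  then show ?case using K by (simp add: add_mset_commute)
next
  case (RConj S1 G1 a C D1 E)
  show ?case
    by (rule G3I.RConj) (fact RConj.IH(1)[OF RConj.prems], fact RConj.IH(2)[OF RConj.prems])
next
  case (LDisj S1 a C G1 D1 E)
  show ?case
  proof (cases "(a, Disj C E) = (x, Disj A B) \<and> G1 = G0")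
    case True
    then show ?thesis using LDisj.hyps by (cases t) auto
  next
    case False
    then obtain K where K: "G1 = add_mset (x, Disj A B) K" "G0 = add_mset (a, Disj C E) K"
      using LDisj.prems by (auto simp: add_eq_conv_ex)
    have "G3I S1 (add_mset (x, if t then A else B) (add_mset (a,C) K)) D1"
      by (rule LDisj.IH(1)) (simp add: K add_mset_commute)
    moreover have "G3I S1 (add_mset (x, if t then A else B) (add_mset (a,E) K)) D1"
      by (rule LDisj.IH(2)) (simp add: K add_mset_commute)
    ultimately have "G3I S1 (add_mset (a, Disj C E) (add_mset (x, if t then A else B) K)) D1"
      by (intro G3I.LDisj) (simp_all add: add_mset_commute)
    then show ?thesis using K by (simp add: add_mset_commute)
  qed
next
  case (RDisj S1 G1 a C E D1)
  show ?case
    by (rule G3I.RDisj) (fact RDisj.IH[OF RDisj.prems])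
next
  case (LImp a b S1 C E G1 D1)
  have h1: "G3I (add_mset (a,b) S1) (add_mset (x, if t then A else B) G0) (add_mset (b,C) D1)"
    by (fact LImp.IH(1)[OF LImp.prems])
  have eq2: "add_mset (a, Imp C E) (add_mset (b,E) G1) = add_mset (x, Disj A B) (add_mset (b,E) G0)"
    by (metis add_mset_commute LImp.prems(1))
  have h2: "G3I (add_mset (a,b) S1) (add_mset (b,E) (add_mset (x, if t then A else B) G0)) D1"
    using LImp.IH(2)[OF eq2] by (simp add: add_mset_commute)
  have m0: "(a, Imp C E) \<in># add_mset (a, Imp C E) G1" by simp
  have m: "(a, Imp C E) \<in># G0" using m0 by (simp only: LImp.prems(1)) auto
  show ?case by (rule LImpM[OF _ _ h1 h2]) (use m in auto)
next
  case (RImp b S1 G1 D1 a C E)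
  have h: "G3I (add_mset (a,b) S1) (add_mset (x, if t then A else B) (add_mset (b,C) G0)) (add_mset (b,E) D1)"
    by (rule RImp.IH) (simp add: RImp.prems add_mset_commute)
  have xl: "x \<in> labels_fm G1" using RImp.prems by simp
  show ?case
    by (rule G3I.RImp[where y=b]) (use RImp.hyps RImp.prems xl h in \<open>auto simp: add_mset_commute\<close>)
next
  case (Refl a S1 G1 D1)
  show ?case by (rule G3I.Refl[where x=a]) (fact Refl.IH[OF Refl.prems])
next
  case (Trans a b c S1 G1 D1)
  show ?case by (rule G3I.Trans) (fact Trans.IH[OF Trans.prems])
qed


lemma invRConj:
  "G3I S G D \<Longrightarrow> D = add_mset (x, Conj A B) D0 \<Longrightarrow> G3I S G (add_mset (x, if t then A else B) D0)"
proof (induction arbitrary: D0 rule: G3I.induct)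
  case (Ax a b S1 P G1 D1)
  have m0: "(b, Atm P) \<in># add_mset (b, Atm P) D1" by simp
  have m: "(b, Atm P) \<in># D0" using m0 by (simp only: Ax.prems(1)) auto
  show ?case by (rule AxM[of a b _ P]) (use m in auto)
next
  case (LBot S1 a G1 D1)
  show ?case by (rule LBotM[of a]) simp
next
  case (LConj S1 G1 a C E D1)
  show ?case by (rule G3I.LConj) (fact LConj.IH[OF LConj.prems])
next
  case (RConj S1 G1 a C D1 E)
  show ?case
  proof (cases "(a, Conj C E) = (x, Conj A B) \<and> D1 = D0")
    case True
    then show ?thesis using RConj.hyps by (cases t) auto
  next
    case False
    then obtain K where K: "D1 = add_mset (x, Conj A B) K" "D0 = add_mset (a, Conj C E) K"
      using RConj.prems by (auto simp: add_eq_conv_ex)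
    have "G3I S1 G1 (add_mset (x, if t then A else B) (add_mset (a,C) K))"
      by (rule RConj.IH(1)) (simp add: K add_mset_commute)
    moreover have "G3I S1 G1 (add_mset (x, if t then A else B) (add_mset (a,E) K))"
      by (rule RConj.IH(2)) (simp add: K add_mset_commute)
    ultimately have "G3I S1 G1 (add_mset (a, Conj C E) (add_mset (x, if t then A else B) K))"
      by (intro G3I.RConj) (simp_all add: add_mset_commute)
    then show ?thesis using K by (simp add: add_mset_commute)
  qed
next
  case (LDisj S1 a C G1 D1 E)
  show ?case by (rule G3I.LDisj) (fact LDisj.IH(1)[OF LDisj.prems], fact LDisj.IH(2)[OF LDisj.prems])
next
  case (RDisj S1 G1 a C E D1)
  obtain K where K: "D1 = add_mset (x, Conj A B) K" "D0 = add_mset (a, Disj C E) K"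
    using RDisj.prems by (auto simp: add_eq_conv_ex)
  have "G3I S1 G1 (add_mset (x, if t then A else B) ({#(a,C),(a,E)#} + K))"
    by (rule RDisj.IH) (simp add: K add_mset_commute)
  then have "G3I S1 G1 (add_mset (a, Disj C E) (add_mset (x, if t then A else B) K))"
    by (intro G3I.RDisj) (simp add: add_mset_commute)
  then show ?case using K by (simp add: add_mset_commute)
next
  case (LImp a b S1 C E G1 D1)
  have h1: "G3I (add_mset (a,b) S1) (add_mset (a, Imp C E) G1) (add_mset (x, if t then A else B) (add_mset (b,C) D0))"
    by (rule LImp.IH(1)) (simp add: LImp.prems add_mset_commute)
  have h2: "G3I (add_mset (a,b) S1) (add_mset (a, Imp C E) (add_mset (b,E) G1)) (add_mset (x, if t then A else B) D0)"
    by (fact LImp.IH(2)[OF LImp.prems])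
  show ?case by (rule G3I.LImp) (use h1 h2 in \<open>simp_all add: add_mset_commute\<close>)
next
  case (RImp b S1 G1 D1 a C E)
  obtain K where K: "D1 = add_mset (x, Conj A B) K" "D0 = add_mset (a, Imp C E) K"
    using RImp.prems by (auto simp: add_eq_conv_ex)
  have h: "G3I (add_mset (a,b) S1) (add_mset (b,C) G1) (add_mset (x, if t then A else B) (add_mset (b,E) K))"
    by (rule RImp.IH) (simp add: K add_mset_commute)
  have xl: "x \<in> labels_fm D1" using K by simp
  have "G3I S1 G1 (add_mset (a, Imp C E) (add_mset (x, if t then A else B) K))"
    by (rule G3I.RImp[where y=b]) (use RImp.hyps K xl h in \<open>auto simp: add_mset_commute\<close>)
  then show ?case using K by (simp add: add_mset_commute)
next
  case (Refl a S1 G1 D1)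
  show ?case by (rule G3I.Refl[where x=a]) (fact Refl.IH[OF Refl.prems])
next
  case (Trans a b c S1 G1 D1)
  show ?case by (rule G3I.Trans) (fact Trans.IH[OF Trans.prems])
qed

lemma invRDisj:
  "G3I S G D \<Longrightarrow> D = add_mset (x, Disj A B) D0 \<Longrightarrow> G3I S G (add_mset (x,A) (add_mset (x,B) D0))"
proof (induction arbitrary: D0 rule: G3I.induct)
  case (Ax a b S1 P G1 D1)
  have m0: "(b, Atm P) \<in># add_mset (b, Atm P) D1" by simp
  have m: "(b, Atm P) \<in># D0" using m0 by (simp only: Ax.prems(1)) auto
  show ?case by (rule AxM[of a b _ P]) (use m in auto)
next
  case (LBot S1 a G1 D1)
  show ?case by (rule LBotM[of a]) simp
next
  case (LConj S1 G1 a C E D1)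
  show ?case by (rule G3I.LConj) (fact LConj.IH[OF LConj.prems])
next
  case (RConj S1 G1 a C D1 E)
  obtain K where K: "D1 = add_mset (x, Disj A B) K" "D0 = add_mset (a, Conj C E) K"
    using RConj.prems by (auto simp: add_eq_conv_ex)
  have "G3I S1 G1 (add_mset (x,A) (add_mset (x,B) (add_mset (a,C) K)))"
    by (rule RConj.IH(1)) (simp add: K add_mset_commute)
  moreover have "G3I S1 G1 (add_mset (x,A) (add_mset (x,B) (add_mset (a,E) K)))"
    by (rule RConj.IH(2)) (simp add: K add_mset_commute)
  ultimately have "G3I S1 G1 (add_mset (a, Conj C E) (add_mset (x,A) (add_mset (x,B) K)))"
    by (intro G3I.RConj) (simp_all add: add_mset_commute)
  then show ?case using K by (simp add: add_mset_commute)
next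
  case (LDisj S1 a C G1 D1 E)
  show ?case by (rule G3I.LDisj) (fact LDisj.IH(1)[OF LDisj.prems], fact LDisj.IH(2)[OF LDisj.prems])
next
  case (RDisj S1 G1 a C E D1)
  show ?case
  proof (cases "(a, Disj C E) = (x, Disj A B) \<and> D1 = D0")
    case True
    then show ?thesis using RDisj.hyps by (simp add: add_mset_commute)
  next
    case False
    then obtain K where K: "D1 = add_mset (x, Disj A B) K" "D0 = add_mset (a, Disj C E) K"
      using RDisj.prems by (auto simp: add_eq_conv_ex)
    have "G3I S1 G1 (add_mset (x,A) (add_mset (x,B) ({#(a,C),(a,E)#} + K)))"
      by (rule RDisj.IH) (simp add: K add_mset_commute)
    then have "G3I S1 G1 (add_mset (a, Disj C E) (add_mset (x,A) (add_mset (x,B) K)))"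
      by (intro G3I.RDisj) (simp add: add_mset_commute)
    then show ?thesis using K by (simp add: add_mset_commute)
  qed
next
  case (LImp a b S1 C E G1 D1)
  have h1: "G3I (add_mset (a,b) S1) (add_mset (a, Imp C E) G1) (add_mset (x,A) (add_mset (x,B) (add_mset (b,C) D0)))"
    by (rule LImp.IH(1)) (simp add: LImp.prems add_mset_commute)
  have h2: "G3I (add_mset (a,b) S1) (add_mset (a, Imp C E) (add_mset (b,E) G1)) (add_mset (x,A) (add_mset (x,B) D0))"
    by (fact LImp.IH(2)[OF LImp.prems])
  show ?case by (rule G3I.LImp) (use h1 h2 in \<open>simp_all add: add_mset_commute\<close>)
next
  case (RImp b S1 G1 D1 a C E)
  obtain K where K: "D1 = add_mset (x, Disj A B) K" "D0 = add_mset (a, Imp C E) K"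
    using RImp.prems by (auto simp: add_eq_conv_ex)
  have h: "G3I (add_mset (a,b) S1) (add_mset (b,C) G1) (add_mset (x,A) (add_mset (x,B) (add_mset (b,E) K)))"
    by (rule RImp.IH) (simp add: K add_mset_commute)
  have xl: "x \<in> labels_fm D1" using K by simp
  have "G3I S1 G1 (add_mset (a, Imp C E) (add_mset (x,A) (add_mset (x,B) K)))"
    by (rule G3I.RImp[where y=b]) (use RImp.hyps K xl h in \<open>auto simp: add_mset_commute\<close>)
  then show ?case using K by (simp add: add_mset_commute)
next
  case (Refl a S1 G1 D1)
  show ?case by (rule G3I.Refl[where x=a]) (fact Refl.IH[OF Refl.prems])
next
  case (Trans a b c S1 G1 D1)
  show ?case by (rule G3I.Trans) (fact Trans.IH[OF Trans.prems])
qed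


lemma invRImp:
  "G3I S G D \<Longrightarrow> D = add_mset (x, Imp A B) D0 \<Longrightarrow> w \<notin> labels_rel S \<Longrightarrow> w \<notin> labels_fm G \<Longrightarrow> w \<notin> labels_fm D
   \<Longrightarrow> G3I (add_mset (x,w) S) (add_mset (w,A) G) (add_mset (w,B) D0)"
proof (induction arbitrary: D0 w rule: G3I.induct)
  case (Ax a b S1 P G1 D1)
  have m0: "(b, Atm P) \<in># add_mset (b, Atm P) D1" by simp
  have m: "(b, Atm P) \<in># D0" using m0 by (simp only: Ax.prems(1)) auto
  show ?case by (rule AxM[of a b _ P]) (use m in auto)
next
  case (LBot S1 a G1 D1)
  show ?case by (rule LBotM[of a]) simp
next
  case (LConj S1 G1 a C E D1)
  have "G3I (add_mset (x,w) S1) (add_mset (w,A) (G1 + {#(a,C),(a,E)#})) (add_mset (w,B) D0)"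
    by (rule LConj.IH) (use LConj.prems in auto)
  then have "G3I (add_mset (x,w) S1) (add_mset (a, Conj C E) (add_mset (w,A) G1)) (add_mset (w,B) D0)"
    by (intro G3I.LConj) (simp add: add_mset_commute)
  then show ?case by (simp add: add_mset_commute)
next
  case (RConj S1 G1 a C D1 E)
  obtain K where K: "D1 = add_mset (x, Imp A B) K" "D0 = add_mset (a, Conj C E) K"
    using RConj.prems by (auto simp: add_eq_conv_ex)
  have "G3I (add_mset (x,w) S1) (add_mset (w,A) G1) (add_mset (w,B) (add_mset (a,C) K))"
    by (rule RConj.IH(1)) (use RConj.prems K in \<open>auto simp: add_mset_commute\<close>)
  moreover have "G3I (add_mset (x,w) S1) (add_mset (w,A) G1) (add_mset (w,B) (add_mset (a,E) K))"
    by (rule RConj.IH(2)) (use RConj.prems K in \<open>auto simp: add_mset_commute\<close>)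
  ultimately have "G3I (add_mset (x,w) S1) (add_mset (w,A) G1) (add_mset (a, Conj C E) (add_mset (w,B) K))"
    by (intro G3I.RConj) (simp_all add: add_mset_commute)
  then show ?case using K by (simp add: add_mset_commute)
next
  case (LDisj S1 a C G1 D1 E)
  have "G3I (add_mset (x,w) S1) (add_mset (w,A) (add_mset (a,C) G1)) (add_mset (w,B) D0)"
    by (rule LDisj.IH(1)) (use LDisj.prems in auto)
  moreover have "G3I (add_mset (x,w) S1) (add_mset (w,A) (add_mset (a,E) G1)) (add_mset (w,B) D0)"
    by (rule LDisj.IH(2)) (use LDisj.prems in auto)
  ultimately have "G3I (add_mset (x,w) S1) (add_mset (a, Disj C E) (add_mset (w,A) G1)) (add_mset (w,B) D0)"
    by (intro G3I.LDisj) (simp_all add: add_mset_commute)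
  then show ?case by (simp add: add_mset_commute)
next
  case (RDisj S1 G1 a C E D1)
  obtain K where K: "D1 = add_mset (x, Imp A B) K" "D0 = add_mset (a, Disj C E) K"
    using RDisj.prems by (auto simp: add_eq_conv_ex)
  have "G3I (add_mset (x,w) S1) (add_mset (w,A) G1) (add_mset (w,B) ({#(a,C),(a,E)#} + K))"
    by (rule RDisj.IH) (use RDisj.prems K in \<open>auto simp: add_mset_commute\<close>)
  then have "G3I (add_mset (x,w) S1) (add_mset (w,A) G1) (add_mset (a, Disj C E) (add_mset (w,B) K))"
    by (intro G3I.RDisj) (simp add: add_mset_commute)
  then show ?case using K by (simp add: add_mset_commute)
next
  case (LImp a b S1 C E G1 D1)
  have h1: "G3I (add_mset (x,w) (add_mset (a,b) S1)) (add_mset (w,A) (add_mset (a, Imp C E) G1)) (add_mset (w,B) (add_mset (b,C) D0))"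
    by (rule LImp.IH(1)) (use LImp.prems in \<open>auto simp: add_mset_commute\<close>)
  have h2: "G3I (add_mset (x,w) (add_mset (a,b) S1)) (add_mset (w,A) (add_mset (a, Imp C E) (add_mset (b,E) G1))) (add_mset (w,B) D0)"
    by (rule LImp.IH(2)) (use LImp.prems in \<open>auto simp: add_mset_commute\<close>)
  show ?case
    by (rule LImpM[of a b _ C E]) (use h1 h2 in \<open>simp_all add: add_mset_commute\<close>)
next
  case (RImp b S1 G1 D1 a C E)
  show ?case
  proof (cases "(a, Imp C E) = (x, Imp A B) \<and> D1 = D0")
    case True
    define f where "f = id(b:=w)"
    have H: "G3I (add_mset (x,b) S1) (add_mset (b,A) G1) (add_mset (b,B) D0)"
      using RImp.hyps True by auto
    have fx: "f x = x" "f b = w" using RImp.hyps True by (auto simp: f_def)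
    have e1: "image_mset (map_prod f f) S1 = S1"
      using RImp.hyps by (auto simp: f_def intro!: mapS_id)
    have e2: "image_mset (apfst f) G1 = G1"
      using RImp.hyps by (auto simp: f_def intro!: mapF_id)
    have e3: "image_mset (apfst f) D0 = D0"
      using RImp.hyps True by (auto simp: f_def intro!: mapF_id)
    show ?thesis using subst_weak[OF H, of f "{#}" "{#}" "{#}"] fx e1 e2 e3 by simp
  next
    case False
    then obtain K where K: "D1 = add_mset (x, Imp A B) K" "D0 = add_mset (a, Imp C E) K"
      using RImp.prems by (auto simp: add_eq_conv_ex)
    let ?X = "labels_rel (add_mset (a,b) S1) \<union> labels_fm (add_mset (b,C) G1) \<union> labels_fm (add_mset (b,E) D1) \<union> {w}"
    obtain w' where w': "w' \<notin> ?X" using ex_fresh[of ?X] by auto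
    have H: "G3I (add_mset (x,w') (add_mset (a,b) S1)) (add_mset (w',A) (add_mset (b,C) G1)) (add_mset (w',B) (add_mset (b,E) K))"
      by (rule RImp.IH) (use w' K in \<open>auto simp: add_mset_commute\<close>)
    let ?Y = "labels_rel S1 \<union> labels_fm G1 \<union> labels_fm D1 \<union> {w, a, x, b, w'}"
    obtain z where z: "z \<notin> ?Y" using ex_fresh[of ?Y] by auto
    define f where "f = (id(w':=w))(b:=z)"
    have xl: "x \<in> labels_fm D1" using K by simp
    have fx: "f x = x" "f a = a" "f b = z" "f w' = w"
      using RImp.hyps w' xl by (auto simp: f_def)
    have e1: "image_mset (map_prod f f) S1 = S1"
      using RImp.hyps w' by (auto simp: f_def intro!: mapS_id)
    have e2: "image_mset (apfst f) G1 = G1"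
      using RImp.hyps w' by (auto simp: f_def intro!: mapF_id)
    have e3: "image_mset (apfst f) K = K"
      using RImp.hyps w' K by (auto simp: f_def intro!: mapF_id)
    have H2: "G3I (add_mset (a,z) (add_mset (x,w) S1)) (add_mset (z,C) (add_mset (w,A) G1)) (add_mset (z,E) (add_mset (w,B) K))"
      using subst_weak[OF H, of f "{#}" "{#}" "{#}"] fx e1 e2 e3 by (simp add: add_mset_commute)
    have "G3I (add_mset (x,w) S1) (add_mset (w,A) G1) (add_mset (a, Imp C E) (add_mset (w,B) K))"
      by (rule G3I.RImp[where y=z]) (use z H2 RImp.prems K in auto)
    then show ?thesis using K by (simp add: add_mset_commute)
  qed
next
  case (Refl a S1 G1 D1)
  let ?X = "labels_rel (add_mset (a,a) S1) \<union> labels_fm G1 \<union> labels_fm D1"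
  obtain w' where w': "w' \<notin> ?X" using ex_fresh[of ?X] by auto
  have H: "G3I (add_mset (x,w') (add_mset (a,a) S1)) (add_mset (w',A) G1) (add_mset (w',B) D0)"
    by (rule Refl.IH) (use w' Refl.prems in auto)
  define f where "f = id(w':=w)"
  have xl: "x \<in> labels_fm D1" using Refl.prems by simp
  have fx: "f x = x" "f a = a" "f w' = w"
    using w' xl by (auto simp: f_def)
  have e1: "image_mset (map_prod f f) S1 = S1"
    using w' by (auto simp: f_def intro!: mapS_id)
  have e2: "image_mset (apfst f) G1 = G1"
    using w' by (auto simp: f_def intro!: mapF_id)
  have e3: "image_mset (apfst f) D0 = D0"
    using w' Refl.prems by (auto simp: f_def intro!: mapF_id)
  have H2: "G3I (add_mset (a,a) (add_mset (x,w) S1)) (add_mset (w,A) G1) (add_mset (w,B) D0)"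
    using subst_weak[OF H, of f "{#}" "{#}" "{#}"] fx e1 e2 e3 by (simp add: add_mset_commute)
  show ?case by (rule G3I.Refl[OF H2])
next
  case (Trans a b c S1 G1 D1)
  have H: "G3I (add_mset (x,w) ({#(a,b),(b,c),(a,c)#} + S1)) (add_mset (w,A) G1) (add_mset (w,B) D0)"
    by (rule Trans.IH) (use Trans.prems in auto)
  have "G3I ({#(a,b),(b,c)#} + add_mset (x,w) S1) (add_mset (w,A) G1) (add_mset (w,B) D0)"
    by (rule G3I.Trans) (use H in \<open>simp add: add_mset_commute\<close>)
  then show ?case by (simp add: add_mset_commute)
qed


lemma TransM': "(a,b) \<in># S \<Longrightarrow> (b,c) \<in># S \<Longrightarrow> b \<noteq> c \<Longrightarrow> G3I (add_mset (a,c) S) G D \<Longrightarrow> G3I S G D"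
proof -
  assume h: "(a,b) \<in># S" "(b,c) \<in># S" "b \<noteq> c" "G3I (add_mset (a,c) S) G D"
  show ?thesis
  proof (cases "a = b")
    case False then show ?thesis using TransM h by blast
  next
    case True
    obtain S0 where S0: "S = add_mset (a,c) S0" using h(2) True multi_member_split by metis
    have "G3I ({#(a,a),(a,c)#} + S0) G D"
      by (rule G3I.Trans) (use weakS[OF h(4), of "(a,a)"] S0 in \<open>simp add: add_mset_commute\<close>)
    then have "G3I (add_mset (a,a) S) G D" using S0 by (simp add: add_mset_commute)
    then show ?thesis by (rule G3I.Refl)
  qed
qed

lemma Lprec: "(x,y) \<in># S \<Longrightarrow> G3I S (G + {#(x,A),(y,A)#}) D \<Longrightarrow> G3I S (add_mset (x,A) G) D"
proof (induction A arbitrary: x y S G D)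
  case (Atm P)
  then show ?case by (intro innerL[OF Atm.prems(2) Atm.prems(1) refl]) simp
next
  case Bot
  then show ?case by (intro LBotM[of x]) simp
next
  case (Conj B C)
  have h1: "G3I S (add_mset (y,B) (add_mset (y,C) (G + {#(x,Conj B C)#}))) D"
    by (rule invLConj[OF Conj.prems(2)]) (simp add: add_mset_commute)
  have h2: "G3I S (add_mset (x,B) (add_mset (x,C) (add_mset (y,B) (add_mset (y,C) G)))) D"
    by (rule invLConj[OF h1]) (simp add: add_mset_commute)
  have h3: "G3I S (add_mset (x,B) (add_mset (x,C) (add_mset (y,C) G))) D"
    by (rule Conj.IH(1)[OF Conj.prems(1)]) (use h2 in \<open>simp add: add_mset_commute\<close>)
  have h4: "G3I S (add_mset (x,C) (add_mset (x,B) G)) D"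
    by (rule Conj.IH(2)[OF Conj.prems(1)]) (use h3 in \<open>simp add: add_mset_commute\<close>)
  show ?case by (rule G3I.LConj) (use h4 in \<open>simp add: add_mset_commute\<close>)
next
  case (Disj B C)
  have h1: "G3I S (add_mset (y, if t then B else C) (G + {#(x,Disj B C)#})) D" for t
    by (rule invLDisj[OF Disj.prems(2)]) (simp add: add_mset_commute)
  have h2: "G3I S (add_mset (x, if t then B else C) (add_mset (y, if t then B else C) G)) D" for t
    by (rule invLDisj[OF h1[of t]]) (simp add: add_mset_commute)
  have h3: "G3I S (add_mset (x,B) G) D"
    by (rule Disj.IH(1)[OF Disj.prems(1)]) (use h2[of True] in \<open>simp add: add_mset_commute\<close>)
  have h4: "G3I S (add_mset (x,C) G) D"
    by (rule Disj.IH(2)[OF Disj.prems(1)]) (use h2[of False] in \<open>simp add: add_mset_commute\<close>)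
  show ?case by (rule G3I.LDisj[OF h3 h4])
next
  case (Imp B C)
  then show ?case by (intro innerL[OF Imp.prems(2) Imp.prems(1) refl]) simp
qed

lemma Rprec: "(x,y) \<in># S \<Longrightarrow> G3I S G (D + {#(x,A),(y,A)#}) \<Longrightarrow> G3I S G (add_mset (y,A) D)"
proof (induction A arbitrary: x y S G D)
  case (Atm P)
  then show ?case by (intro innerR[OF Atm.prems(2) Atm.prems(1) refl]) simp
next
  case Bot
  then show ?case by (intro innerR[OF Bot.prems(2) Bot.prems(1) refl]) simp
next
  case (Conj B C)
  have h1: "G3I S G (add_mset (x, if t then B else C) (add_mset (y, Conj B C) D))" for t
    by (rule invRConj[OF Conj.prems(2)]) (simp add: add_mset_commute)
  have h2: "G3I S G (add_mset (y, if t then B else C) (add_mset (x, if t then B else C) D))" for t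
    by (rule invRConj[OF h1[of t]]) (simp add: add_mset_commute)
  have h3: "G3I S G (add_mset (y,B) D)"
    by (rule Conj.IH(1)[OF Conj.prems(1)]) (use h2[of True] in \<open>simp add: add_mset_commute\<close>)
  have h4: "G3I S G (add_mset (y,C) D)"
    by (rule Conj.IH(2)[OF Conj.prems(1)]) (use h2[of False] in \<open>simp add: add_mset_commute\<close>)
  show ?case by (rule G3I.RConj[OF h3 h4])
next
  case (Disj B C)
  have h1: "G3I S G (add_mset (x,B) (add_mset (x,C) (add_mset (y, Disj B C) D)))"
    by (rule invRDisj[OF Disj.prems(2)]) (simp add: add_mset_commute)
  have h2: "G3I S G (add_mset (y,B) (add_mset (y,C) (add_mset (x,B) (add_mset (x,C) D))))"
    by (rule invRDisj[OF h1]) (simp add: add_mset_commute)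
  have h3: "G3I S G (add_mset (y,B) (add_mset (y,C) (add_mset (x,C) D)))"
    by (rule Disj.IH(1)[OF Disj.prems(1)]) (use h2 in \<open>simp add: add_mset_commute\<close>)
  have h4: "G3I S G (add_mset (y,C) (add_mset (y,B) D))"
    by (rule Disj.IH(2)[OF Disj.prems(1)]) (use h3 in \<open>simp add: add_mset_commute\<close>)
  show ?case by (rule G3I.RDisj) (use h4 in \<open>simp add: add_mset_commute\<close>)
next
  case (Imp B C)
  have xl: "x \<in> labels_rel S" "y \<in> labels_rel S" using Imp.prems(1) mem_labels_rel by blast+
  let ?X = "labels_rel S \<union> labels_fm G \<union> labels_fm D"
  obtain v where v: "v \<notin> ?X" using ex_fresh[of ?X] by auto
  have H1: "G3I (add_mset (y,v) S) (add_mset (v,B) G) (add_mset (v,C) (add_mset (x, Imp B C) D))"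
    by (rule invRImp[OF Imp.prems(2)]) (use v xl in \<open>auto simp: add_mset_commute\<close>)
  let ?Y = "?X \<union> {v}"
  obtain w where w: "w \<notin> ?Y" using ex_fresh[of ?Y] by auto
  have H2: "G3I (add_mset (x,w) (add_mset (y,v) S)) (add_mset (w,B) (add_mset (v,B) G)) (add_mset (w,C) (add_mset (v,C) D))"
    by (rule invRImp[OF H1]) (use v w xl in \<open>auto simp: add_mset_commute\<close>)
  define f where "f = id(w:=v)"
  have fx: "f x = x" "f y = y" "f v = v" "f w = v" using xl w by (auto simp: f_def)
  have e1: "image_mset (map_prod f f) S = S"
    using w by (auto simp: f_def intro!: mapS_id)
  have e2: "image_mset (apfst f) G = G"
    using w by (auto simp: f_def intro!: mapF_id)
  have e3: "image_mset (apfst f) D = D"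
    using w by (auto simp: f_def intro!: mapF_id)
  let ?S = "add_mset (v,v) (add_mset (x,v) (add_mset (y,v) S))"
  have H3: "G3I ?S (add_mset (v,B) G + {#(v,B),(v,B)#} - {#(v,B)#}) (add_mset (v,C) (add_mset (v,C) D))"
    using subst_weak[OF H2, of f "{#(v,v)#}" "{#}" "{#}"] fx e1 e2 e3 by (simp add: add_mset_commute)
  have H4: "G3I ?S (add_mset (v,B) G) (add_mset (v,C) (add_mset (v,C) D))"
    by (rule Lprec[of v v]) (use H3 in \<open>simp_all add: add_mset_commute\<close>)
  have H5: "G3I ?S (add_mset (v,B) G) (add_mset (v,C) D)"
    by (rule Imp.IH(2)[of v v]) (use H4 in \<open>simp_all add: add_mset_commute\<close>)
  have H6: "G3I (add_mset (x,v) (add_mset (y,v) S)) (add_mset (v,B) G) (add_mset (v,C) D)"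
    by (rule G3I.Refl[OF H5])
  have H7: "G3I (add_mset (y,v) S) (add_mset (v,B) G) (add_mset (v,C) D)"
    by (rule TransM'[of x y _ v]) (use H6 Imp.prems(1) v xl in auto)
  show ?case
    by (rule G3I.RImp[where y=v]) (use H7 v xl in auto)
qed

theorem mainTheorem2:
  shows "(\<forall>x y S G D A. G3I (add_mset (x,y) S) (G + {#(x,A), (y,A)#}) D
            \<longrightarrow> G3I (add_mset (x,y) S) (add_mset (x,A) G) D)
       \<and> (\<forall>x y S G D A. G3I (add_mset (x,y) S) G (D + {#(x,A), (y,A)#})
            \<longrightarrow> G3I (add_mset (x,y) S) G (add_mset (y,A) D))"
  using Lprec Rprec by (metis union_single_eq_member)

end
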